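(* Let $n=ab$ where $a\ge b\ge 2$ are integers. Fix an integer $\beta\ge 2$, and for a positive integer $d$ define $\vartheta_d:\{0,1,\ldots,n-1\}\to\mathbb{Z}_{\ge 0}$ by $\vartheta_d(x)=\beta\lfloor x/d\rfloor d+(x\bmod d)$. Let $X$ be the $n\times n$ matrix with entries $X_{j,k}=\frac{1}{\sqrt n}\zeta_{\beta n}^{\vartheta_a(j)\vartheta_b(k)}$ for $j,k\in\{0,\ldots,n-1\}$, where $\zeta_m=e^{2\pi\mathtt{i}/m}$. Then $X$ is type-II. Moreover, if $G$ is the graph with adjacency matrix $A=X\,\mathrm{diag}(\vartheta_b(0),\ldots,\vartheta_b(n-1))\,X^{-1}$ (i.e. eigenvalues $\{\vartheta_b(k)\}$ with $A$ unitarily diagonalized by $X$), then $G$ has universal perfect state transfer.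
   Context: A type-II matrix is a unitary matrix all of whose entries have the same modulus. $x\bmod d$ denotes the remainder in $\{0,\ldots,d-1\}$. A graph with Hermitian adjacency matrix $A$ has universal perfect state transfer if for every pair of vertices $v,w$ there is $t>0$ with $|\langle w|e^{-\mathtt{i} At}|v\rangle|=1$. *)

theory Defs
  imports Complex_Main
begin

text \<open>n x n complex matrices are represented as functions nat => nat => complex;
  only entries with indices in {0..<n} are meaningful.\<close>

definition mmult :: "nat \<Rightarrow> (nat \<Rightarrow> nat \<Rightarrow> complex) \<Rightarrow> (nat \<Rightarrow> nat \<Rightarrow> complex) \<Rightarrow> nat \<Rightarrow> nat \<Rightarrow> complex" where
  "mmult n M N = (\<lambda>i j. \<Sum>k<n. M i k * N k j)"

definition idm :: "nat \<Rightarrow> nat \<Rightarrow> complex" where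
  "idm = (\<lambda>i j. if i = j then 1 else 0)"

definition adj :: "(nat \<Rightarrow> nat \<Rightarrow> complex) \<Rightarrow> nat \<Rightarrow> nat \<Rightarrow> complex" where
  "adj M = (\<lambda>i j. cnj (M j i))"

definition mat_eq :: "nat \<Rightarrow> (nat \<Rightarrow> nat \<Rightarrow> complex) \<Rightarrow> (nat \<Rightarrow> nat \<Rightarrow> complex) \<Rightarrow> bool" where
  "mat_eq n M N \<longleftrightarrow> (\<forall>i<n. \<forall>j<n. M i j = N i j)"

definition unitary :: "nat \<Rightarrow> (nat \<Rightarrow> nat \<Rightarrow> complex) \<Rightarrow> bool" where
  "unitary n U \<longleftrightarrow> mat_eq n (mmult n U (adj U)) idm \<and> mat_eq n (mmult n (adj U) U) idm"

definition type_II :: "nat \<Rightarrow> (nat \<Rightarrow> nat \<Rightarrow> complex) \<Rightarrow> bool" where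
  "type_II n U \<longleftrightarrow> unitary n U \<and> (\<exists>c. \<forall>j<n. \<forall>k<n. cmod (U j k) = c)"

definition is_inverse :: "nat \<Rightarrow> (nat \<Rightarrow> nat \<Rightarrow> complex) \<Rightarrow> (nat \<Rightarrow> nat \<Rightarrow> complex) \<Rightarrow> bool" where
  "is_inverse n M N \<longleftrightarrow> mat_eq n (mmult n M N) idm \<and> mat_eq n (mmult n N M) idm"

fun mpow :: "nat \<Rightarrow> (nat \<Rightarrow> nat \<Rightarrow> complex) \<Rightarrow> nat \<Rightarrow> nat \<Rightarrow> nat \<Rightarrow> complex" where
  "mpow n M 0 = idm"
| "mpow n M (Suc k) = mmult n (mpow n M k) M"

definition mexp :: "nat \<Rightarrow> (nat \<Rightarrow> nat \<Rightarrow> complex) \<Rightarrow> nat \<Rightarrow> nat \<Rightarrow> complex" where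
  "mexp n M = (\<lambda>i j. \<Sum>k. mpow n M k i j / of_nat (fact k))"

definition transition :: "nat \<Rightarrow> (nat \<Rightarrow> nat \<Rightarrow> complex) \<Rightarrow> real \<Rightarrow> nat \<Rightarrow> nat \<Rightarrow> complex" where
  "transition n A t = mexp n (\<lambda>i j. - \<i> * complex_of_real t * A i j)"

text \<open>Universal perfect state transfer; vertices are 0..<n, and
  the entry \<langle>w|U(t)|v\<rangle> is transition n A t w v.\<close>
definition universal_pst :: "nat \<Rightarrow> (nat \<Rightarrow> nat \<Rightarrow> complex) \<Rightarrow> bool" where
  "universal_pst n A \<longleftrightarrow> (\<forall>v<n. \<forall>w<n. \<exists>t>0. cmod (transition n A t w v) = 1)"

definition vartheta :: "nat \<Rightarrow> nat \<Rightarrow> nat \<Rightarrow> nat" where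
  "vartheta \<beta> d x = \<beta> * (x div d) * d + x mod d"

definition zeta :: "nat \<Rightarrow> complex" where
  "zeta m = exp (2 * complex_of_real pi * \<i> / of_nat m)"

definition diagm :: "(nat \<Rightarrow> complex) \<Rightarrow> nat \<Rightarrow> nat \<Rightarrow> complex" where
  "diagm f = (\<lambda>i j. if i = j then f i else 0)"

end

theory Submission
  imports Defs
begin


lemma sum_split_ab:
  fixes f :: "nat \<Rightarrow> 'a::comm_monoid_add"
  shows "(\<Sum>j<b*a. f j) = (\<Sum>q<b. \<Sum>r<a. f (q*a+r))"
proof -
  have "(\<Sum>j<b*a. f j) = (\<Sum>q<b. \<Sum>j\<in>{q*a..<q*a+a}. f j)"
    by (rule sum.nat_group[symmetric])
  also have "\<dots> = (\<Sum>q<b. \<Sum>r<a. f (q*a+r))"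
  proof (rule sum.cong[OF refl])
    fix q show "(\<Sum>j\<in>{q*a..<q*a+a}. f j) = (\<Sum>r<a. f (q*a+r))"
      using sum.shift_bounds_nat_ivl[of f 0 "q*a" a] by (simp add: atLeast0LessThan add.commute)
  qed
  finally show ?thesis .
qed

lemma charsum:
  fixes m :: nat and d :: int
  assumes "m > 0"
  shows "(\<Sum>q<m. cis (2*pi*(real q * d / m))) = (if int m dvd d then of_nat m else 0)"
proof -
  define z where "z = cis (2*pi*(d/m))"
  have zq: "cis (2*pi*(real q * d / m)) = z ^ q" for q
    by (simp add: z_def DeMoivre mult_ac)
  have zm: "z ^ m = 1"
  proof -
    have "z ^ m = cis (2*pi*of_int d)" using assms by (simp add: z_def DeMoivre)
    also have "\<dots> = 1" by (rule cis_multiple_2pi) simp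
    finally show ?thesis .
  qed
  show ?thesis
  proof (cases "int m dvd d")
    case True
    then obtain e where e: "d = int m * e" by auto
    have "z = 1" unfolding z_def using assms e
      by (simp add: cis_multiple_2pi)
    then show ?thesis using True by (simp only: zq) simp
  next
    case False
    have "z \<noteq> 1"
    proof
      assume "z = 1"
      then have "cos (2*pi*(d/m)) = 1" unfolding z_def by (metis cis.simps(1) one_complex.simps(1))
      then obtain k :: int where k: "2*pi*(d/m) = k*2*pi" by (auto simp: cos_one_2pi_int)
      then have "real_of_int d = k * m" using assms by (simp add: field_simps)
      then have "d = k * int m" by (metis of_int_eq_iff of_int_mult of_int_of_nat_eq)
      then show False using False by simp
    qed
    then show ?thesis using False by (simp only: zq) (simp add: geometric_sum zm)
  qed
qed


lemma idm_left: "i < n \<Longrightarrow> (\<Sum>q<n. idm i q * f q) = f i"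
proof -
  assume "i < n"
  have "\<And>q. idm i q * f q = (if i = q then f q else 0)" by (simp add: idm_def)
  then show ?thesis using \<open>i < n\<close> by simp
qed

lemma idm_right: "j < n \<Longrightarrow> (\<Sum>q<n. f q * idm q j) = f j"
proof -
  assume "j < n"
  have "\<And>q. f q * idm q j = (if j = q then f q else 0)" by (simp add: idm_def)
  then show ?thesis using \<open>j < n\<close> by simp
qed

lemma inv_eq_adj:
  assumes XY: "mat_eq n (mmult n X Y) idm" and YX: "mat_eq n (mmult n Y X) idm"
    and XZ: "mat_eq n (mmult n X Z) idm"
    and i: "i < n" and j: "j < n"
  shows "Z i j = Y i j"
proof -
  have "Y i j = (\<Sum>p<n. Y i p * idm p j)" using j by (simp add: idm_right)
  also have "\<dots> = (\<Sum>p<n. Y i p * (\<Sum>q<n. X p q * Z q j))"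
    using XZ j by (intro sum.cong refl) (auto simp: mat_eq_def mmult_def)
  also have "\<dots> = (\<Sum>p<n. \<Sum>q<n. Y i p * X p q * Z q j)"
    by (simp only: sum_distrib_left mult.assoc)
  also have "\<dots> = (\<Sum>q<n. \<Sum>p<n. Y i p * X p q * Z q j)"
    by (rule sum.swap)
  also have "\<dots> = (\<Sum>q<n. (\<Sum>p<n. Y i p * X p q) * Z q j)"
    by (simp only: sum_distrib_right)
  also have "\<dots> = (\<Sum>q<n. idm i q * Z q j)"
    using YX i by (intro sum.cong refl) (auto simp: mat_eq_def mmult_def)
  also have "\<dots> = Z i j" using i by (simp add: idm_left)
  finally show ?thesis by simp
qed

lemma mpow_diag:
  assumes XY: "\<forall>i<n. \<forall>j<n. (\<Sum>l<n. X i l * Y l j) = idm i j"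
    and YX: "\<forall>i<n. \<forall>j<n. (\<Sum>p<n. Y i p * X p j) = idm i j"
    and M: "\<forall>p<n. \<forall>j<n. M p j = (\<Sum>q<n. X p q * c q * Y q j)"
  shows "i < n \<Longrightarrow> j < n \<Longrightarrow> mpow n M k i j = (\<Sum>l<n. X i l * c l ^ k * Y l j)"
proof (induction k arbitrary: i j)
  case 0
  then show ?case using XY by simp
next
  case (Suc k)
  have "mpow n M (Suc k) i j = (\<Sum>p<n. mpow n M k i p * M p j)" by (simp add: mmult_def)
  also have "\<dots> = (\<Sum>p<n. (\<Sum>l<n. X i l * c l ^ k * Y l p) * (\<Sum>q<n. X p q * c q * Y q j))"
    using Suc M by (intro sum.cong refl) auto
  also have "\<dots> = (\<Sum>p<n. \<Sum>l<n. \<Sum>q<n. (X i l * c l ^ k) * (Y l p * X p q) * (c q * Y q j))"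
    unfolding sum_product by (intro sum.cong refl) (simp only: mult_ac)
  also have "\<dots> = (\<Sum>l<n. \<Sum>p<n. \<Sum>q<n. (X i l * c l ^ k) * (Y l p * X p q) * (c q * Y q j))"
    by (rule sum.swap)
  also have "\<dots> = (\<Sum>l<n. \<Sum>q<n. \<Sum>p<n. (X i l * c l ^ k) * (Y l p * X p q) * (c q * Y q j))"
    by (intro sum.cong refl sum.swap)
  also have "\<dots> = (\<Sum>l<n. \<Sum>q<n. (X i l * c l ^ k) * (\<Sum>p<n. Y l p * X p q) * (c q * Y q j))"
    by (intro sum.cong refl) (simp only: sum_distrib_left sum_distrib_right)
  also have "\<dots> = (\<Sum>l<n. \<Sum>q<n. (X i l * c l ^ k) * idm l q * (c q * Y q j))"
    using YX by (intro sum.cong refl) auto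
  also have "\<dots> = (\<Sum>l<n. (X i l * c l ^ k) * (\<Sum>q<n. idm l q * (c q * Y q j)))"
    by (intro sum.cong refl) (simp only: sum_distrib_left mult.assoc)
  also have "\<dots> = (\<Sum>l<n. (X i l * c l ^ k) * (c l * Y l j))"
    by (intro sum.cong refl) (simp add: idm_left)
  also have "\<dots> = (\<Sum>l<n. X i l * c l ^ Suc k * Y l j)"
    by (intro sum.cong refl) (simp add: mult_ac)
  finally show ?case .
qed

lemma mexp_diag:
  assumes XY: "\<forall>i<n. \<forall>j<n. (\<Sum>l<n. X i l * Y l j) = idm i j"
    and YX: "\<forall>i<n. \<forall>j<n. (\<Sum>p<n. Y i p * X p j) = idm i j"
    and M: "\<forall>p<n. \<forall>j<n. M p j = (\<Sum>q<n. X p q * c q * Y q j)"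
    and i: "i < n" and j: "j < n"
  shows "mexp n M i j = (\<Sum>l<n. X i l * exp (c l) * Y l j)"
proof -
  have e: "(\<lambda>k. c l ^ k / of_nat (fact k)) sums exp (c l)" for l
  proof -
    have "(\<lambda>k. c l ^ k /\<^sub>R fact k) sums exp (c l)" by (rule exp_converges)
    moreover have "c l ^ k /\<^sub>R fact k = c l ^ k / of_nat (fact k)" for k
      by (simp add: scaleR_conv_of_real divide_inverse mult.commute of_real_inverse)
    ultimately show ?thesis by simp
  qed
  have "(\<lambda>k. \<Sum>l<n. X i l * Y l j * (c l ^ k / of_nat (fact k))) sums (\<Sum>l<n. X i l * Y l j * exp (c l))"
    by (intro sums_sum sums_mult e)
  moreover have "mpow n M k i j / of_nat (fact k) = (\<Sum>l<n. X i l * Y l j * (c l ^ k / of_nat (fact k)))" for k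
    using mpow_diag[OF XY YX M i j, of k] by (simp add: sum_divide_distrib mult_ac)
  ultimately have "(\<lambda>k. mpow n M k i j / of_nat (fact k)) sums (\<Sum>l<n. X i l * Y l j * exp (c l))"
    by simp
  then show ?thesis unfolding mexp_def by (simp add: sums_iff mult_ac)
qed


lemma dvd_small: fixes u u' b :: nat assumes "u < b" "u' < b" "int b dvd (int u - int u')" shows "u = u'"
proof -
  obtain k where k: "int u - int u' = int b * k" using assms(3) by auto
  show ?thesis
  proof (cases "k = 0")
    case True then show ?thesis using k by simp
  next
    case False
    then have "\<bar>int b * k\<bar> \<ge> int b" by (simp add: abs_mult) (smt (verit) mult_le_cancel_left1 of_nat_0_le_iff)
    then show ?thesis using k assms by linarith
  qed
qed

lemma vartheta_split: "r < a \<Longrightarrow> vartheta \<beta> a (q*a+r) = \<beta>*q*a + r"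
  by (simp add: vartheta_def)

lemma key:
  fixes a b \<beta> s s' u u' :: nat
  assumes a: "a > 0" and b: "b > 0" and be: "\<beta> > 0" and s: "s < a" "s' < a" and u: "u < b" "u' < b"
  shows "(\<Sum>j<b*a. cis (2*pi*(real (vartheta \<beta> a j) * (real (\<beta>*s*b+u) - real (\<beta>*s'*b+u')) / real (\<beta>*a*b))))
     = (if s = s' \<and> u = u' then of_nat (a*b) else 0)"
proof -
  define w where "w = (real s - real s')/a + (real u - real u')/real (\<beta>*a*b)"
  have tm: "cis (2*pi*(real (vartheta \<beta> a (q*a+r)) * (real (\<beta>*s*b+u) - real (\<beta>*s'*b+u')) / real (\<beta>*a*b)))
     = cis (2*pi*(real q * (int u - int u') / b)) * cis (2*pi*(real r * w))" if r: "r < a" for q r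
  proof -
    have eq: "real (vartheta \<beta> a (q*a+r)) * (real (\<beta>*s*b+u) - real (\<beta>*s'*b+u')) / real (\<beta>*a*b)
      = of_int (int \<beta> * int q * (int s - int s')) + (real q * (int u - int u') / b + real r * w)"
    proof -
      have v: "real (vartheta \<beta> a (q*a+r)) = real \<beta> * q * a + r" using r by (simp add: vartheta_split)
      show ?thesis unfolding v using a b be by (simp add: w_def field_simps)
    qed
    have "cis (2*pi*(real (vartheta \<beta> a (q*a+r)) * (real (\<beta>*s*b+u) - real (\<beta>*s'*b+u')) / real (\<beta>*a*b)))
       = cis (2*pi*of_int (int \<beta> * int q * (int s - int s'))) * cis (2*pi*(real q * (int u - int u') / b + real r * w))"
      unfolding eq by (simp only: distrib_left flip: cis_mult)
    also have "\<dots> = cis (2*pi*(real q * (int u - int u') / b + real r * w))"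
      by (subst cis_multiple_2pi) auto
    also have "\<dots> = cis (2*pi*(real q * (int u - int u') / b)) * cis (2*pi*(real r * w))"
      by (simp only: distrib_left flip: cis_mult)
    finally show ?thesis .
  qed
  have "(\<Sum>j<b*a. cis (2*pi*(real (vartheta \<beta> a j) * (real (\<beta>*s*b+u) - real (\<beta>*s'*b+u')) / real (\<beta>*a*b))))
    = (\<Sum>q<b. \<Sum>r<a. cis (2*pi*(real q * (int u - int u') / b)) * cis (2*pi*(real r * w)))"
    unfolding sum_split_ab by (intro sum.cong refl) (rule tm, simp)
  also have "\<dots> = (\<Sum>q<b. cis (2*pi*(real q * (int u - int u') / b))) * (\<Sum>r<a. cis (2*pi*(real r * w)))"
    by (simp add: sum_product)
  also have "\<dots> = (if s = s' \<and> u = u' then of_nat (a*b) else 0)"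
  proof (cases "u = u'")
    case False
    then have "\<not> int b dvd (int u - int u')" using dvd_small u by blast
    then show ?thesis using charsum[OF b, of "int u - int u'"] False by simp
  next
    case True
    have w: "real r * w = real r * (int s - int s') / a" for r
      using True by (simp add: w_def)
    have c1: "(\<Sum>q<b. cis (2*pi*(real q * (int u - int u') / b))) = of_nat b"
      using charsum[OF b, of "int u - int u'"] True by simp
    have c2: "(\<Sum>r<a. cis (2*pi*(real r * w))) = (if s = s' then of_nat a else 0)"
    proof -
      have "(\<Sum>r<a. cis (2*pi*(real r * w))) = (\<Sum>r<a. cis (2*pi*(real r * (int s - int s') / a)))"
        by (simp only: w)
      also have "\<dots> = (if int a dvd (int s - int s') then of_nat a else 0)" by (rule charsum[OF a])
      also have "\<dots> = (if s = s' then of_nat a else 0)"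
        using dvd_small[OF s] by auto
      finally show ?thesis .
    qed
    show ?thesis using True by (simp add: c1 c2)
  qed
  finally show ?thesis .
qed


theorem theorem7:
  fixes a b \<beta> n :: nat and X :: "nat \<Rightarrow> nat \<Rightarrow> complex"
  assumes "b \<ge> 2" and "a \<ge> b" and "n = a * b" and "\<beta> \<ge> 2"
    and "X = (\<lambda>j k. (1 / complex_of_real (sqrt (real n)))
                 * zeta (\<beta> * n) ^ (vartheta \<beta> a j * vartheta \<beta> b k))"
  shows "type_II n X \<and>
    (\<forall>Xinv. is_inverse n X Xinv \<longrightarrow>
       universal_pst n (mmult n (mmult n X (diagm (\<lambda>k. of_nat (vartheta \<beta> b k)))) Xinv))"
proof -
  have a: "a > 0" and b: "b > 0" and be: "\<beta> > 0" using assms by auto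
  have n: "n > 0" using a b assms(3) by simp
  define c :: complex where "c = 1 / complex_of_real (sqrt (real n))"
  have cc: "cnj c * c = 1 / of_nat n"
  proof -
    have c': "c = complex_of_real (1 / sqrt (real n))" by (simp add: c_def)
    have r: "1 / sqrt (real n) * (1 / sqrt (real n)) = 1 / real n" by simp
    have "cnj c * c = complex_of_real (1 / sqrt (real n) * (1 / sqrt (real n)))"
      unfolding c' by (simp only: complex_cnj_complex_of_real of_real_mult)
    then show ?thesis unfolding r by simp
  qed
  have zp: "zeta N ^ m = cis (2*pi*(real m / real N))" for N m
  proof -
    have "zeta N = cis (2*pi / real N)" by (simp add: zeta_def cis_conv_exp mult_ac)
    then show ?thesis by (simp add: DeMoivre mult_ac)
  qed
  have Xjk: "X j k = c * cis (2*pi*(real (vartheta \<beta> a j) * real (vartheta \<beta> b k) / real (\<beta>*n)))" for j k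
    using assms(5) by (simp add: zp c_def)
  have prod: "cnj (c * cis x) * (c * cis y) = (1 / of_nat n) * cis (y - x)" for x y
  proof -
    have "cnj (c * cis x) * (c * cis y) = (cnj c * c) * (cis (-x) * cis y)"
      by (simp add: cis_cnj mult_ac)
    also have "\<dots> = (1 / of_nat n) * cis (y - x)" by (simp add: cc cis_mult)
    finally show ?thesis .
  qed
  have thd: "vartheta \<beta> d k = \<beta>*(k div d)*d + k mod d" for d k by (simp add: vartheta_def)
  have cols: "(\<Sum>j<n. cnj (X j k) * X j k') = idm k k'" if k: "k < n" "k' < n" for k k'
  proof -
    have sk: "k div b < a" "k' div b < a" using k assms(3) b
      by (auto simp: less_mult_imp_div_less mult.commute)
    have uk: "k mod b < b" "k' mod b < b" using b by auto
    note K = key[OF a b be sk(2) sk(1) uk(2) uk(1), unfolded thd[symmetric]]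
    have nba: "n = b * a" using assms(3) by simp
    have "(\<Sum>j<n. cnj (X j k) * X j k') = (\<Sum>j<b*a. (1 / of_nat n) *
        cis (2*pi*(real (vartheta \<beta> a j) * (real (vartheta \<beta> b k') - real (vartheta \<beta> b k)) / real (\<beta>*a*b))))"
      unfolding nba[symmetric]
    proof (intro sum.cong refl)
      fix j
      show "cnj (X j k) * X j k' = (1 / of_nat n) *
        cis (2*pi*(real (vartheta \<beta> a j) * (real (vartheta \<beta> b k') - real (vartheta \<beta> b k)) / real (\<beta>*a*b)))"
        unfolding Xjk prod
        by (rule arg_cong[where f="\<lambda>x. (1 / of_nat n) * cis x"]) (use assms(3) a b be in \<open>simp add: field_simps\<close>)
    qed
    also have "\<dots> = (1 / of_nat n) * (if k' div b = k div b \<and> k' mod b = k mod b then of_nat (a*b) else 0)"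
      by (simp only: K flip: sum_distrib_left)
    also have "\<dots> = idm k k'"
      using assms(3) n by (auto simp: idm_def) (metis div_mult_mod_eq)
    finally show ?thesis .
  qed
  have rows: "(\<Sum>k<n. X j k * cnj (X j' k)) = idm j j'" if j: "j < n" "j' < n" for j j'
  proof -
    have sj: "j div a < b" "j' div a < b" using j assms(3) a
      by (auto simp: less_mult_imp_div_less mult.commute)
    have rj: "j mod a < a" "j' mod a < a" using a by auto
    note K = key[OF b a be sj(1) sj(2) rj(1) rj(2), unfolded thd[symmetric]]
    have "(\<Sum>k<n. X j k * cnj (X j' k)) = (\<Sum>k<a*b. (1 / of_nat n) *
        cis (2*pi*(real (vartheta \<beta> b k) * (real (vartheta \<beta> a j) - real (vartheta \<beta> a j')) / real (\<beta>*b*a))))"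
      unfolding assms(3)[symmetric]
    proof (intro sum.cong refl)
      fix k
      show "X j k * cnj (X j' k) = (1 / of_nat n) *
        cis (2*pi*(real (vartheta \<beta> b k) * (real (vartheta \<beta> a j) - real (vartheta \<beta> a j')) / real (\<beta>*b*a)))"
        unfolding Xjk mult.commute[of _ "cnj _"] prod
        by (rule arg_cong[where f="\<lambda>x. (1 / of_nat n) * cis x"]) (use assms(3) a b be in \<open>simp add: field_simps\<close>)
    qed
    also have "\<dots> = (1 / of_nat n) * (if j div a = j' div a \<and> j mod a = j' mod a then of_nat (b*a) else 0)"
      by (simp only: K flip: sum_distrib_left)
    also have "\<dots> = idm j j'"
      using assms(3) n by (auto simp: idm_def) (metis div_mult_mod_eq)
    finally show ?thesis .
  qed
  have XY: "\<forall>i<n. \<forall>j<n. (\<Sum>l<n. X i l * adj X l j) = idm i j"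
    using rows by (simp add: adj_def)
  have YX: "\<forall>i<n. \<forall>j<n. (\<Sum>p<n. adj X i p * X p j) = idm i j"
    using cols by (simp add: adj_def)
  have U: "unitary n X" unfolding unitary_def mat_eq_def mmult_def using XY YX by simp
  have T2: "type_II n X" unfolding type_II_def
  proof (intro conjI U exI allI impI)
    fix j k show "cmod (X j k) = cmod c" by (simp add: Xjk norm_mult)
  qed
  show ?thesis
  proof (intro conjI T2 allI impI)
    fix Xinv assume inv: "is_inverse n X Xinv"
    have Zeq: "Xinv i j = adj X i j" if "i < n" "j < n" for i j
      using inv_eq_adj[of n X "adj X" Xinv i j] U inv that unfolding unitary_def is_inverse_def by blast
    define A where "A = mmult n (mmult n X (diagm (\<lambda>k. of_nat (vartheta \<beta> b k)))) Xinv"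
    have Apj: "A p j = (\<Sum>q<n. X p q * of_nat (vartheta \<beta> b q) * adj X q j)" if "p < n" "j < n" for p j
    proof -
      have "A p j = (\<Sum>q<n. (\<Sum>r<n. X p r * diagm (\<lambda>k. of_nat (vartheta \<beta> b k)) r q) * Xinv q j)"
        by (simp add: A_def mmult_def)
      also have "\<dots> = (\<Sum>q<n. X p q * of_nat (vartheta \<beta> b q) * adj X q j)"
      proof (intro sum.cong refl)
        fix q assume q: "q \<in> {..<n}"
        have "(\<Sum>r<n. X p r * diagm (\<lambda>k. of_nat (vartheta \<beta> b k)) r q) = X p q * of_nat (vartheta \<beta> b q)"
        proof -
          have "\<And>r. X p r * diagm (\<lambda>k. of_nat (vartheta \<beta> b k)) r q = (if q = r then X p q * of_nat (vartheta \<beta> b q) else 0)"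
            by (simp add: diagm_def)
          then show ?thesis using q by simp
        qed
        then show "(\<Sum>r<n. X p r * diagm (\<lambda>k. of_nat (vartheta \<beta> b k)) r q) * Xinv q j = X p q * of_nat (vartheta \<beta> b q) * adj X q j"
          using Zeq q that by simp
      qed
      finally show ?thesis .
    qed
    show "universal_pst n A" unfolding universal_pst_def
    proof (intro allI impI)
      fix v w assume v: "v < n" and w: "w < n"
      define N where "N = real (\<beta>*n)"
      have Npos: "N > 0" using be n by (simp add: N_def)
      have pos: "vartheta \<beta> a v < \<beta> * n"
      proof -
        have "vartheta \<beta> a v \<le> \<beta> * v"
        proof -
          have "\<beta> * v = \<beta> * (v div a) * a + \<beta> * (v mod a)"
            by (metis add_mult_distrib2 div_mult_mod_eq mult.assoc)
          moreover have "v mod a \<le> \<beta> * (v mod a)" using be by simp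
          ultimately show ?thesis by (simp add: vartheta_def)
        qed
        also have "\<beta> * v < \<beta> * n" using v be by simp
        finally show ?thesis .
      qed
      define t :: real where "t = 2*pi*(N + real (vartheta \<beta> a w) - real (vartheta \<beta> a v)) / N"
      have posr: "real (vartheta \<beta> a v) < real (\<beta>*n)" using pos by (simp only: of_nat_less_iff)
      have tpos: "t > 0" using posr Npos unfolding t_def N_def
        by (intro divide_pos_pos mult_pos_pos) auto
      define cf where "cf q = - \<i> * complex_of_real t * of_nat (vartheta \<beta> b q)" for q
      have M: "\<forall>p<n. \<forall>j<n. (\<lambda>i j. - \<i> * complex_of_real t * A i j) p j = (\<Sum>q<n. X p q * cf q * adj X q j)"
        by (simp add: Apj cf_def sum_distrib_left mult_ac)
      have "transition n A t w v = (\<Sum>l<n. X w l * exp (cf l) * adj X l v)"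
        unfolding transition_def by (rule mexp_diag[OF XY YX M w v])
      also have "\<dots> = (\<Sum>l<n. 1 / of_nat n)"
      proof (intro sum.cong refl)
        fix l
        have e: "exp (cf l) = cis (- (t * real (vartheta \<beta> b l)))"
          by (simp add: cf_def cis_conv_exp mult_ac)
        have "X w l * exp (cf l) * adj X l v = cnj (X v l) * X w l * exp (cf l)"
          by (simp add: adj_def mult_ac)
        also have "\<dots> = (1 / of_nat n) * cis (2*pi*(real (vartheta \<beta> a w) * real (vartheta \<beta> b l) / N)
            - 2*pi*(real (vartheta \<beta> a v) * real (vartheta \<beta> b l) / N) + - (t * real (vartheta \<beta> b l)))"
          unfolding Xjk prod e N_def by (simp add: cis_mult mult.assoc)
        also have "2*pi*(real (vartheta \<beta> a w) * real (vartheta \<beta> b l) / N)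
            - 2*pi*(real (vartheta \<beta> a v) * real (vartheta \<beta> b l) / N) + - (t * real (vartheta \<beta> b l))
            = 2*pi*(- real (vartheta \<beta> b l))"
          using Npos unfolding t_def by (simp add: field_simps)
        also have "cis (2*pi*(- real (vartheta \<beta> b l))) = 1"
          by (rule cis_multiple_2pi) simp
        finally show "X w l * exp (cf l) * adj X l v = 1 / of_nat n" by simp
      qed
      also have "\<dots> = 1" using n by simp
      finally show "\<exists>t>0. cmod (transition n A t w v) = 1" using tpos by auto
    qed
  qed
qed
end
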